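(* Assume (i)–(iii) of the standing assumption below. Say $\mu$ is decomposable if there are constants $\alpha_i$ ($i\in\mathcal I$), $\beta_k$ ($k\in\mathcal K$) with $\mu_{ik}=\alpha_i\beta_k$ for all $(i,k)\in\mathcal J$, normalized so that $\sum_k\beta_k=1$. Then: (1) If $\mu$ is decomposable, $\sum_i\lambda_i/\alpha_i=\sum_k\beta_k=1$. (2) If $\mu$ is decomposable, the unique solution of the dual problem is $y^*_i=\alpha_i^{-1}$, $i\in\mathcal I$, $z^*_k=\beta_k$, $k\in\mathcal K$. (3) If $\mu$ is decomposable and $\mathcal J=\mathcal I\times\mathcal K$, then the LP has multiple optimal solutions. (4) If $I=K=2$ and $\mathcal J=\mathcal I\times\mathcal K$, then the LP has multiple optimal solutions if and only if $\mu$ is decomposable; moreover, the number $M$ of extreme points of $\mathcal S_{\mathrm{LP}}$ is at most $2$.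
   Context: Let $\mathcal I$ (classes) and $\mathcal K$ (servers) be finite sets of cardinalities $I$ and $K$, and let $\mathcal J\subset\mathcal I\times\mathcal K$ (activities) have cardinality $J$. For $i\in\mathcal I$ let $\mathcal J_i=\{(i,k)\in\mathcal J\}$ and for $k\in\mathcal K$ let $\mathcal J^k=\{(i,k)\in\mathcal J\}$. Let $\lambda\in(0,\infty)^I$ and $\mu\in(0,\infty)^{\mathcal J}$. Let $R$ be the $I\times J$ matrix with $R_{ij}=\mu_j$ if $j\in\mathcal J_i$ and $0$ otherwise, and $G$ the $K\times J$ matrix with $G_{kj}=1$ if $j\in\mathcal J^k$ and $0$ otherwise. The LP is: minimize $\rho$ over $(\xi,\rho)\in\mathbb R^J\times\mathbb R$ subject to $R\xi=\lambda$, $G\xi\le\rho 1_K$, $\xi\ge0$. The dual problem is: maximize $y\cdot\lambda$ over $(y,z)\in\mathbb R^I\times\mathbb R^K$ subject to $\sum_k z_k=1$, $yR\le zG$, $z\ge 0$. Standing assumption: (i) the optimal value of the LP is $1$; (ii) letting $\mathcal S_{\mathrm{LP}}=\{\xi:(\xi,1)\text{ is an optimal solution of the LP}\}$, every $\xi\in\mathcal S_{\mathrm{LP}}$ satisfies $(G\xi)_k=1$ for all $k$; (iii) the dual problem has a unique solution $(y^*,z^* )$. *)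

theory Defs
  imports "HOL-Analysis.Analysis"
begin

text \<open>Classes are the elements of the finite type 'i, servers the elements of the finite
  type 'k; activities form a set J of pairs. A primal vector xi in R^J is represented as
  an element of real^('i \<times> 'k) that vanishes outside J.\<close>

definition Rmat :: "('i \<times> 'k) set \<Rightarrow> ('i \<times> 'k \<Rightarrow> real) \<Rightarrow> 'i \<Rightarrow> 'i \<times> 'k \<Rightarrow> real" where
  "Rmat J mu i j = (if j \<in> J \<and> fst j = i then mu j else 0)"

definition Gmat :: "('i \<times> 'k) set \<Rightarrow> 'k \<Rightarrow> 'i \<times> 'k \<Rightarrow> real" where
  "Gmat J k j = (if j \<in> J \<and> snd j = k then 1 else 0)"

definition Rxi :: "('i \<times> 'k) set \<Rightarrow> ('i \<times> 'k \<Rightarrow> real) \<Rightarrow> real ^ ('i::finite \<times> 'k::finite) \<Rightarrow> 'i \<Rightarrow> real" where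
  "Rxi J mu xi i = (\<Sum>j\<in>J. Rmat J mu i j * xi $ j)"

definition Gxi :: "('i \<times> 'k) set \<Rightarrow> real ^ ('i::finite \<times> 'k::finite) \<Rightarrow> 'k \<Rightarrow> real" where
  "Gxi J xi k = (\<Sum>j\<in>J. Gmat J k j * xi $ j)"

definition lp_feasible ::
  "('i::finite \<times> 'k::finite) set \<Rightarrow> ('i \<Rightarrow> real) \<Rightarrow> ('i \<times> 'k \<Rightarrow> real) \<Rightarrow> real ^ ('i \<times> 'k) \<Rightarrow> real \<Rightarrow> bool" where
  "lp_feasible J lam mu xi rho \<longleftrightarrow>
     (\<forall>j. j \<notin> J \<longrightarrow> xi $ j = 0) \<and>
     (\<forall>i. Rxi J mu xi i = lam i) \<and>
     (\<forall>k. Gxi J xi k \<le> rho) \<and>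
     (\<forall>j\<in>J. 0 \<le> xi $ j)"

definition lp_optimal ::
  "('i::finite \<times> 'k::finite) set \<Rightarrow> ('i \<Rightarrow> real) \<Rightarrow> ('i \<times> 'k \<Rightarrow> real) \<Rightarrow> real ^ ('i \<times> 'k) \<Rightarrow> real \<Rightarrow> bool" where
  "lp_optimal J lam mu xi rho \<longleftrightarrow> lp_feasible J lam mu xi rho \<and>
     (\<forall>xi' rho'. lp_feasible J lam mu xi' rho' \<longrightarrow> rho \<le> rho')"

definition S_LP ::
  "('i::finite \<times> 'k::finite) set \<Rightarrow> ('i \<Rightarrow> real) \<Rightarrow> ('i \<times> 'k \<Rightarrow> real) \<Rightarrow> (real ^ ('i \<times> 'k)) set" where
  "S_LP J lam mu = {xi. lp_optimal J lam mu xi 1}"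

definition lp_multiple_optima ::
  "('i::finite \<times> 'k::finite) set \<Rightarrow> ('i \<Rightarrow> real) \<Rightarrow> ('i \<times> 'k \<Rightarrow> real) \<Rightarrow> bool" where
  "lp_multiple_optima J lam mu \<longleftrightarrow>
     (\<exists>xi1 rho1 xi2 rho2. lp_optimal J lam mu xi1 rho1 \<and> lp_optimal J lam mu xi2 rho2 \<and>
        (xi1, rho1) \<noteq> (xi2, rho2))"

definition dual_feasible ::
  "('i::finite \<times> 'k::finite) set \<Rightarrow> ('i \<times> 'k \<Rightarrow> real) \<Rightarrow> ('i \<Rightarrow> real) \<Rightarrow> ('k \<Rightarrow> real) \<Rightarrow> bool" where
  "dual_feasible J mu y z \<longleftrightarrow>
     (\<Sum>k\<in>UNIV. z k) = 1 \<and>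
     (\<forall>j\<in>J. (\<Sum>i\<in>UNIV. y i * Rmat J mu i j) \<le> (\<Sum>k\<in>UNIV. z k * Gmat J k j)) \<and>
     (\<forall>k. 0 \<le> z k)"

definition dual_optimal ::
  "('i::finite \<times> 'k::finite) set \<Rightarrow> ('i \<Rightarrow> real) \<Rightarrow> ('i \<times> 'k \<Rightarrow> real) \<Rightarrow> ('i \<Rightarrow> real) \<Rightarrow> ('k \<Rightarrow> real) \<Rightarrow> bool" where
  "dual_optimal J lam mu y z \<longleftrightarrow> dual_feasible J mu y z \<and>
     (\<forall>y' z'. dual_feasible J mu y' z' \<longrightarrow> (\<Sum>i\<in>UNIV. y' i * lam i) \<le> (\<Sum>i\<in>UNIV. y i * lam i))"

definition decomposable ::
  "('i::finite \<times> 'k::finite) set \<Rightarrow> ('i \<times> 'k \<Rightarrow> real) \<Rightarrow> ('i \<Rightarrow> real) \<Rightarrow> ('k \<Rightarrow> real) \<Rightarrow> bool" where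
  "decomposable J mu alpha beta \<longleftrightarrow>
     (\<forall>i k. (i, k) \<in> J \<longrightarrow> mu (i, k) = alpha i * beta k) \<and> (\<Sum>k\<in>UNIV. beta k) = 1"

end

theory Submission
  imports Defs
begin


lemma sum_y_Rmat:
  fixes J :: "('i::finite \<times> 'k::finite) set"
  assumes "j \<in> J"
  shows "(\<Sum>i\<in>UNIV. y i * Rmat J mu i j) = y (fst j) * mu j"
  using assms by (simp add: Rmat_def if_distrib[of "\<lambda>x. y _ * x"] cong: if_cong)

lemma sum_z_Gmat:
  fixes J :: "('i::finite \<times> 'k::finite) set"
  assumes "j \<in> J"
  shows "(\<Sum>k\<in>UNIV. z k * Gmat J k j) = z (snd j)"
  using assms by (simp add: Gmat_def if_distrib[of "\<lambda>x. z _ * x"] cong: if_cong)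

lemma identA:
  fixes J :: "('i::finite \<times> 'k::finite) set"
  assumes "\<forall>i. Rxi J mu xi i = lam i"
  shows "(\<Sum>i\<in>UNIV. y i * lam i) = (\<Sum>j\<in>J. (\<Sum>i\<in>UNIV. y i * Rmat J mu i j) * xi $ j)"
proof -
  have "(\<Sum>i\<in>UNIV. y i * lam i) = (\<Sum>i\<in>UNIV. y i * Rxi J mu xi i)" using assms by simp
  also have "\<dots> = (\<Sum>i\<in>UNIV. \<Sum>j\<in>J. y i * Rmat J mu i j * xi $ j)"
    by (simp add: Rxi_def sum_distrib_left mult.assoc)
  also have "\<dots> = (\<Sum>j\<in>J. \<Sum>i\<in>UNIV. y i * Rmat J mu i j * xi $ j)" by (rule sum.swap)
  also have "\<dots> = (\<Sum>j\<in>J. (\<Sum>i\<in>UNIV. y i * Rmat J mu i j) * xi $ j)"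
    by (simp add: sum_distrib_right)
  finally show ?thesis .
qed

lemma identB:
  fixes J :: "('i::finite \<times> 'k::finite) set"
  assumes "\<forall>k. Gxi J xi k = 1"
  shows "(\<Sum>k\<in>UNIV. z k) = (\<Sum>j\<in>J. (\<Sum>k\<in>UNIV. z k * Gmat J k j) * xi $ j)"
proof -
  have "(\<Sum>k\<in>UNIV. z k) = (\<Sum>k\<in>UNIV. z k * Gxi J xi k)" using assms by simp
  also have "\<dots> = (\<Sum>k\<in>UNIV. \<Sum>j\<in>J. z k * Gmat J k j * xi $ j)"
    by (simp add: Gxi_def sum_distrib_left mult.assoc)
  also have "\<dots> = (\<Sum>j\<in>J. \<Sum>k\<in>UNIV. z k * Gmat J k j * xi $ j)" by (rule sum.swap)
  also have "\<dots> = (\<Sum>j\<in>J. (\<Sum>k\<in>UNIV. z k * Gmat J k j) * xi $ j)"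
    by (simp add: sum_distrib_right)
  finally show ?thesis .
qed

lemma Rxi_UNIV:
  "Rxi UNIV mu xi i = (\<Sum>k\<in>UNIV. mu (i,k) * xi $ (i,k))"
proof -
  have "Rxi UNIV mu xi i = (\<Sum>(i',k)\<in>UNIV \<times> UNIV. Rmat UNIV mu i (i',k) * xi $ (i',k))"
    by (simp add: Rxi_def UNIV_Times_UNIV)
  also have "\<dots> = (\<Sum>i'\<in>UNIV. \<Sum>k\<in>UNIV. Rmat UNIV mu i (i',k) * xi $ (i',k))"
    by (rule sum.cartesian_product[symmetric])
  also have "\<dots> = (\<Sum>k\<in>UNIV. mu (i,k) * xi $ (i,k))"
    by (simp add: Rmat_def if_distrib[of "\<lambda>x. x * _"] sum.swap[of _ UNIV UNIV] cong: if_cong)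
  finally show ?thesis .
qed

lemma Gxi_UNIV:
  "Gxi UNIV xi k = (\<Sum>i\<in>UNIV. xi $ (i,k))"
proof -
  have "Gxi UNIV xi k = (\<Sum>(i,k')\<in>UNIV \<times> UNIV. Gmat UNIV k (i,k') * xi $ (i,k'))"
    by (simp add: Gxi_def UNIV_Times_UNIV)
  also have "\<dots> = (\<Sum>i\<in>UNIV. \<Sum>k'\<in>UNIV. Gmat UNIV k (i,k') * xi $ (i,k'))"
    by (rule sum.cartesian_product[symmetric])
  also have "\<dots> = (\<Sum>i\<in>UNIV. xi $ (i,k))"
    by (simp add: Gmat_def if_distrib[of "\<lambda>x. x * _"] cong: if_cong)
  finally show ?thesis .
qed



locale ctx =
  fixes J :: "('i::finite \<times> 'k::finite) set"
    and lam :: "'i \<Rightarrow> real" and mu :: "'i \<times> 'k \<Rightarrow> real"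
    and ystar :: "'i \<Rightarrow> real" and zstar :: "'k \<Rightarrow> real"
  assumes lam_pos: "\<forall>i. 0 < lam i"
    and mu_pos: "\<forall>j\<in>J. 0 < mu j"
    and opt_val: "\<exists>xi. lp_optimal J lam mu xi 1"
    and full_load: "\<forall>xi\<in>S_LP J lam mu. \<forall>k. Gxi J xi k = 1"
    and dual_unique: "\<exists>!yz. dual_optimal J lam mu (fst yz) (snd yz)"
    and ystar_zstar: "dual_optimal J lam mu ystar zstar"
begin

definition xi0 where "xi0 = (SOME xi. lp_optimal J lam mu xi 1)"

lemma xi0_opt: "lp_optimal J lam mu xi0 1"
  unfolding xi0_def using opt_val by (rule someI_ex)

lemma xi0_S: "xi0 \<in> S_LP J lam mu" using xi0_opt by (simp add: S_LP_def)

lemma xi0_G: "Gxi J xi0 k = 1" using full_load xi0_S by blast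

lemma xi0_feas: "lp_feasible J lam mu xi0 1" using xi0_opt by (simp add: lp_optimal_def)

lemma feas_ge1: "lp_feasible J lam mu xi rho \<Longrightarrow> 1 \<le> rho"
  using xi0_opt by (simp add: lp_optimal_def)

lemma feas_opt: "lp_feasible J lam mu xi 1 \<Longrightarrow> lp_optimal J lam mu xi 1"
  using feas_ge1 by (simp add: lp_optimal_def)

lemma opt_rho: "lp_optimal J lam mu xi rho \<Longrightarrow> rho = 1"
  using feas_ge1 xi0_feas unfolding lp_optimal_def by force

lemma weak: assumes "dual_feasible J mu y z" shows "(\<Sum>i\<in>UNIV. y i * lam i) \<le> 1"
proof -
  have f: "\<forall>i. Rxi J mu xi0 i = lam i" "\<forall>j\<in>J. 0 \<le> xi0 $ j"
    using xi0_feas by (auto simp: lp_feasible_def)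
  have "(\<Sum>i\<in>UNIV. y i * lam i) = (\<Sum>j\<in>J. (\<Sum>i\<in>UNIV. y i * Rmat J mu i j) * xi0 $ j)"
    using identA[OF f(1)] .
  also have "\<dots> \<le> (\<Sum>j\<in>J. (\<Sum>k\<in>UNIV. z k * Gmat J k j) * xi0 $ j)"
    apply (rule sum_mono) apply (rule mult_right_mono)
    using assms f(2) by (auto simp: dual_feasible_def)
  also have "\<dots> = (\<Sum>k\<in>UNIV. z k)" using identB[of J xi0 z] xi0_G by simp
  also have "\<dots> = 1" using assms by (simp add: dual_feasible_def)
  finally show ?thesis .
qed

lemma value_eq: assumes "\<forall>j\<in>J. y (fst j) * mu j = z (snd j)"
  shows "(\<Sum>i\<in>UNIV. y i * lam i) = (\<Sum>k\<in>UNIV. z k)"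
proof -
  have f: "\<forall>i. Rxi J mu xi0 i = lam i"
    using xi0_feas by (auto simp: lp_feasible_def)
  have "(\<Sum>i\<in>UNIV. y i * lam i) = (\<Sum>j\<in>J. (\<Sum>i\<in>UNIV. y i * Rmat J mu i j) * xi0 $ j)"
    using identA[OF f(1)] .
  also have "\<dots> = (\<Sum>j\<in>J. (\<Sum>k\<in>UNIV. z k * Gmat J k j) * xi0 $ j)"
    apply (rule sum.cong[OF refl]) using assms by (simp add: sum_y_Rmat sum_z_Gmat)
  also have "\<dots> = (\<Sum>k\<in>UNIV. z k)" using identB[of J xi0 z] xi0_G by simp
  finally show ?thesis .
qed

lemma dual_opt_eq:
  assumes "\<forall>j\<in>J. y (fst j) * mu j = z (snd j)" "\<forall>k. 0 \<le> z k" "(\<Sum>k\<in>UNIV. z k) = 1"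
  shows "dual_optimal J lam mu y z"
proof -
  have df: "dual_feasible J mu y z"
    using assms by (simp add: dual_feasible_def sum_y_Rmat sum_z_Gmat)
  have "(\<Sum>i\<in>UNIV. y i * lam i) = 1" using value_eq[OF assms(1)] assms(3) by simp
  then show ?thesis using df weak by (simp add: dual_optimal_def)
qed

lemma uniq: "dual_optimal J lam mu y z \<Longrightarrow> y = ystar \<and> z = zstar"
  using dual_unique ystar_zstar by (metis fst_conv snd_conv)

lemma part1:
  assumes "decomposable J mu alpha beta"
  shows "(\<Sum>i\<in>UNIV. lam i / alpha i) = (\<Sum>k\<in>UNIV. beta k)"
proof -
  have "\<forall>j\<in>J. (1 / alpha (fst j)) * mu j = beta (snd j)"
  proof
    fix j assume j: "j \<in> J"
    obtain i k where jj: "j = (i,k)" by force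
    have "mu j = alpha i * beta k" using assms j jj by (simp add: decomposable_def)
    moreover have "mu j > 0" using mu_pos j by simp
    ultimately have "alpha i \<noteq> 0" by auto
    then show "(1 / alpha (fst j)) * mu j = beta (snd j)" using \<open>mu j = _\<close> jj by simp
  qed
  from value_eq[OF this] show ?thesis by (simp add: mult.commute)
qed

lemma sign_dual:
  fixes \<sigma> :: real
  assumes dec: "decomposable J mu alpha beta"
    and B: "B = (\<Sum>k\<in>UNIV. if \<sigma> * beta k > 0 then beta k else 0)"
    and pos: "\<sigma> * B > 0"
  shows "dual_optimal J lam mu (\<lambda>i. if \<sigma> * alpha i > 0 then 1 / (alpha i * B) else 0)
           (\<lambda>k. if \<sigma> * beta k > 0 then beta k / B else 0)"
proof (rule dual_opt_eq)
  have Bnz: "B \<noteq> 0" using pos by auto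
  show "\<forall>j\<in>J. (if \<sigma> * alpha (fst j) > 0 then 1 / (alpha (fst j) * B) else 0) * mu j =
     (if \<sigma> * beta (snd j) > 0 then beta (snd j) / B else 0)"
  proof
    fix j assume j: "j \<in> J"
    obtain i k where jj: "j = (i,k)" by force
    have m: "mu j = alpha i * beta k" using dec j jj by (simp add: decomposable_def)
    moreover have "mu j > 0" using mu_pos j by simp
    ultimately have ab: "alpha i * beta k > 0" by auto
    have snz: "\<sigma> \<noteq> 0" using pos by auto
    have eqs: "(\<sigma> * alpha i) * (\<sigma> * beta k) = (\<sigma> * \<sigma>) * (alpha i * beta k)" by (simp add: algebra_simps)
    moreover have "\<sigma> * \<sigma> > 0" using snz by (auto simp: zero_less_mult_iff)
    ultimately have "(\<sigma> * alpha i) * (\<sigma> * beta k) > 0" using ab by (simp only: eqs mult_pos_pos)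
    then have "(0 < \<sigma> * alpha i \<and> 0 < \<sigma> * beta k) \<or> (\<sigma> * alpha i < 0 \<and> \<sigma> * beta k < 0)"
      by (simp only: zero_less_mult_iff)
    then have iff: "\<sigma> * alpha i > 0 \<longleftrightarrow> \<sigma> * beta k > 0" by linarith
    have anz: "alpha i \<noteq> 0" using ab by auto
    show "(if \<sigma> * alpha (fst j) > 0 then 1 / (alpha (fst j) * B) else 0) * mu j =
     (if \<sigma> * beta (snd j) > 0 then beta (snd j) / B else 0)"
      using iff anz Bnz m jj by simp
  qed
  show "\<forall>k. 0 \<le> (if \<sigma> * beta k > 0 then beta k / B else 0)"
  proof
    fix k show "0 \<le> (if \<sigma> * beta k > 0 then beta k / B else 0)"
    proof (cases "\<sigma> * beta k > 0")
      case True
      have s0: "\<sigma> \<noteq> 0" using pos by auto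
      have "0 \<le> (\<sigma> * beta k) / (\<sigma> * B)" using True pos by (intro divide_nonneg_pos) auto
      moreover have "(\<sigma> * beta k) / (\<sigma> * B) = beta k / B" using s0 by simp
      ultimately show ?thesis using True by simp
    qed simp
  qed
  show "(\<Sum>k\<in>UNIV. if \<sigma> * beta k > 0 then beta k / B else 0) = 1"
  proof -
    have "(\<Sum>k\<in>UNIV. if \<sigma> * beta k > 0 then beta k / B else 0) =
        (\<Sum>k\<in>UNIV. (if \<sigma> * beta k > 0 then beta k else 0) / B)"
      by (rule sum.cong) auto
    also have "\<dots> = B / B" by (simp only: sum_divide_distrib[symmetric] B)
    finally show ?thesis using Bnz by simp
  qed
qed

lemma beta_nonneg:
  assumes dec: "decomposable J mu alpha beta"
  shows "0 \<le> beta k"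
proof (rule ccontr)
  assume "\<not> 0 \<le> beta k"
  then have neg: "beta k < 0" by simp
  define Bp where "Bp = (\<Sum>k\<in>UNIV. if 1 * beta k > 0 then beta k else 0)"
  define Bm where "Bm = (\<Sum>k\<in>UNIV. if (-1) * beta k > 0 then beta k else 0)"
  have "Bp + Bm = (\<Sum>k\<in>UNIV. beta k)" unfolding Bp_def Bm_def sum.distrib[symmetric]
    by (rule sum.cong) auto
  then have sumB: "Bp + Bm = 1" using dec by (simp add: decomposable_def)
  have "Bm \<le> (if (-1) * beta k > 0 then beta k else 0)"
  proof -
    have "Bm = (if (-1) * beta k > 0 then beta k else 0) + (\<Sum>k'\<in>UNIV - {k}. if (-1) * beta k' > 0 then beta k' else 0)"
      unfolding Bm_def by (rule sum.remove) auto
    moreover have "(\<Sum>k'\<in>UNIV - {k}. if (-1) * beta k' > 0 then beta k' else 0) \<le> 0"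
      by (rule sum_nonpos) auto
    ultimately show ?thesis by linarith
  qed
  then have Bm: "Bm < 0" using neg by simp
  have Bp: "1 * Bp > 0" using sumB Bm by simp
  have Bm': "(-1) * Bm > 0" using Bm by simp
  note o1 = sign_dual[OF dec Bp_def Bp] and o2 = sign_dual[OF dec Bm_def Bm']
  have "(\<lambda>k. if 1 * beta k > 0 then beta k / Bp else 0) = (\<lambda>k. if (-1) * beta k > 0 then beta k / Bm else 0)"
    using uniq[OF o1] uniq[OF o2] by simp
  then have "(if 1 * beta k > 0 then beta k / Bp else 0) = (if (-1) * beta k > 0 then beta k / Bm else 0)"
    by (rule fun_cong)
  then show False using neg Bm by (simp add: divide_neg_neg)
qed

lemma part2:
  assumes dec: "decomposable J mu alpha beta"
  shows "ystar = (\<lambda>i. 1 / alpha i) \<and> zstar = beta"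
proof -
  have "\<forall>j\<in>J. (1 / alpha (fst j)) * mu j = beta (snd j)"
  proof
    fix j assume j: "j \<in> J"
    obtain i k where jj: "j = (i,k)" by force
    have "mu j = alpha i * beta k" using assms j jj by (simp add: decomposable_def)
    moreover have "mu j > 0" using mu_pos j by simp
    ultimately have "alpha i \<noteq> 0" by auto
    then show "(1 / alpha (fst j)) * mu j = beta (snd j)" using \<open>mu j = _\<close> jj by simp
  qed
  then have "dual_optimal J lam mu (\<lambda>i. 1 / alpha i) beta"
    using dual_opt_eq beta_nonneg[OF dec] dec by (simp add: decomposable_def)
  then show ?thesis using uniq by metis
qed

end


lemma sum_pm:
  fixes i1 i2 :: "'a::finite"
  assumes "i1 \<noteq> i2"
  shows "(\<Sum>i\<in>UNIV. (if i = i1 then 1 else if i = i2 then -1 else 0) :: real) = 0"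
proof -
  have "(\<Sum>i\<in>UNIV. (if i = i1 then 1 else if i = i2 then -1 else 0) :: real)
      = (\<Sum>i\<in>UNIV. (if i = i1 then 1 else 0) + (if i = i2 then -1 else 0))"
    by (rule sum.cong) (use assms in auto)
  also have "\<dots> = 0" by (simp add: sum.distrib)
  finally show ?thesis .
qed

context ctx begin

lemma part3:
  assumes dec: "decomposable J mu alpha beta" and JU: "J = UNIV"
    and i12: "(i1::'i) \<noteq> i2" and k12: "(k1::'k) \<noteq> k2"
  shows "lp_multiple_optima J lam mu"
proof -
  have muf: "mu (i,k) = alpha i * beta k" for i k using dec JU by (simp add: decomposable_def)
  have mup: "mu (i,k) > 0" for i k using mu_pos JU by simp
  have bpos: "beta k > 0" for k
  proof -
    have "beta k \<noteq> 0" using muf[of i1 k] mup[of i1 k] by auto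
    then show ?thesis using beta_nonneg[OF dec, of k] by simp
  qed
  have bnz: "beta k \<noteq> 0" for k using bpos[of k] by simp
  have apos: "alpha i > 0" for i
    using muf[of i k1] mup[of i k1] bpos[of k1] by (simp add: zero_less_mult_iff)
  define a where "a i = lam i / alpha i" for i
  have a_pos: "a i > 0" for i using lam_pos apos by (simp add: a_def)
  have sum_a: "(\<Sum>i\<in>UNIV. a i) = 1" using part1[OF dec] dec by (simp add: a_def decomposable_def)
  define eps where "eps = Min (range a) * Min (range beta)"
  have ma: "Min (range a) \<in> range a" "\<And>i. Min (range a) \<le> a i" by auto
  have mb: "Min (range beta) \<in> range beta" "\<And>k. Min (range beta) \<le> beta k" by auto
  have ma0: "Min (range a) > 0" using ma(1) a_pos by auto
  have mb0: "Min (range beta) > 0" using mb(1) bpos by auto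
  have eps_pos: "eps > 0" using ma0 mb0 by (simp add: eps_def)
  have eps_le: "eps \<le> a i * beta k" for i k
    unfolding eps_def by (rule mult_mono[OF ma(2)[of i] mb(2)[of k] less_imp_le[OF a_pos[of i]] less_imp_le[OF mb0]])
  define s where "s i = (if i = i1 then 1 else if i = i2 then -1 else (0::real))" for i
  define t where "t k = (if k = k1 then 1 else if k = k2 then -1 else (0::real))" for k
  have sum_s: "(\<Sum>i\<in>UNIV. s i) = 0" unfolding s_def using sum_pm[OF i12] .
  have sum_t: "(\<Sum>k\<in>UNIV. t k) = 0" unfolding t_def using sum_pm[OF k12] .
  have st: "-1 \<le> s i * t k" for i k by (simp add: s_def t_def)
  define X where "X c = (\<chi> j. a (fst j) + c * s (fst j) * t (snd j) / beta (snd j))" for c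
  have feas: "lp_feasible J lam mu (X c) 1" if c0: "0 \<le> c" and ce: "c \<le> eps" for c
  proof -
    have R: "Rxi J mu (X c) i = lam i" for i
    proof -
      have "Rxi J mu (X c) i = (\<Sum>k\<in>UNIV. alpha i * a i * beta k + alpha i * c * s i * t k)"
        unfolding JU Rxi_UNIV
        by (rule sum.cong) (auto simp: X_def muf field_simps bnz)
      also have "\<dots> = alpha i * a i * (\<Sum>k\<in>UNIV. beta k) + alpha i * c * s i * (\<Sum>k\<in>UNIV. t k)"
        by (simp add: sum.distrib sum_distrib_left)
      also have "\<dots> = lam i" using dec sum_t apos[of i]
        by (simp add: decomposable_def a_def)
      finally show ?thesis .
    qed
    have G: "Gxi J (X c) k = 1" for k
    proof -
      have "Gxi J (X c) k = (\<Sum>i\<in>UNIV. a i + (c * t k / beta k) * s i)"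
        unfolding JU Gxi_UNIV by (rule sum.cong) (auto simp: X_def)
      also have "\<dots> = (\<Sum>i\<in>UNIV. a i) + (c * t k / beta k) * (\<Sum>i\<in>UNIV. s i)"
        by (simp add: sum.distrib sum_distrib_left)
      also have "\<dots> = 1" using sum_a sum_s by simp
      finally show ?thesis .
    qed
    have N: "0 \<le> X c $ j" for j
    proof -
      obtain i k where jj: "j = (i,k)" by force
      have "c / beta k \<le> a i" using eps_le[of i k] ce bpos[of k] by (simp add: divide_le_eq)
      moreover have "0 \<le> (c / beta k) * (s i * t k + 1)"
        using st[of i k] c0 bpos[of k] by (intro mult_nonneg_nonneg) auto
      ultimately have "0 \<le> a i + (c / beta k) * (s i * t k)" by (simp add: algebra_simps)
      then show ?thesis using jj by (simp add: X_def)
    qed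
    show ?thesis using R G N JU by (simp add: lp_feasible_def)
  qed
  have ne: "X 0 \<noteq> X eps"
  proof
    assume "X 0 = X eps"
    then have "X 0 $ (i1,k1) = X eps $ (i1,k1)" by simp
    then show False using eps_pos bpos[of k1] by (simp add: X_def s_def t_def)
  qed
  show ?thesis unfolding lp_multiple_optima_def
    using feas_opt[OF feas[of 0]] feas_opt[OF feas[of eps]] eps_pos ne by fastforce
qed

end


lemma three_of:
  assumes "\<not> (finite E \<and> card E \<le> 2)"
  obtains x y z where "x \<in> E" "y \<in> E" "z \<in> E" "x \<noteq> y" "y \<noteq> z" "x \<noteq> z"
proof -
  obtain F where F: "F \<subseteq> E" "card F = 3"
  proof (cases "finite E")
    case True
    then have "3 \<le> card E" using assms by simp
    then show ?thesis using obtain_subset_with_card_n that by metis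
  next
    case False
    then show ?thesis using infinite_arbitrarily_large that by metis
  qed
  then obtain x y z where "F = {x,y,z}" "x \<noteq> y" "y \<noteq> z" "x \<noteq> z" by (auto simp: card_3_iff)
  then show ?thesis using that F by auto
qed

lemma between_seg:
  fixes p d :: "'a::real_vector"
  assumes "ta < tb" "tb < tc" "d \<noteq> 0"
  shows "p + tb *\<^sub>R d \<in> open_segment (p + ta *\<^sub>R d) (p + tc *\<^sub>R d)"
proof -
  define u where "u = (tb - ta) / (tc - ta)"
  have u: "0 < u" "u < 1" using assms by (auto simp: u_def divide_less_eq)
  have "u * (tc - ta) = tb - ta" using assms by (simp add: u_def)
  moreover have "(1 - u) * ta + u * tc = ta + u * (tc - ta)" by (simp add: algebra_simps)
  ultimately have "(1 - u) * ta + u * tc = tb" by simp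
  then have "p + tb *\<^sub>R d = (1 - u) *\<^sub>R (p + ta *\<^sub>R d) + u *\<^sub>R (p + tc *\<^sub>R d)"
    by (simp add: algebra_simps scaleR_add_left[symmetric] del: scaleR_add_left)
  moreover have "p + ta *\<^sub>R d \<noteq> p + tc *\<^sub>R d" using assms by simp
  ultimately show ?thesis using u unfolding in_segment by blast
qed

lemma line_extreme:
  fixes p d :: "'a::real_vector"
  assumes S: "S \<subseteq> range (\<lambda>t. p + t *\<^sub>R d)"
  shows "finite {x. x extreme_point_of S} \<and> card {x. x extreme_point_of S} \<le> 2"
proof (rule ccontr)
  assume "\<not> ?thesis"
  then obtain x y z where xyz: "x extreme_point_of S" "y extreme_point_of S" "z extreme_point_of S"
      "x \<noteq> y" "y \<noteq> z" "x \<noteq> z"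
    by (rule three_of) auto
  have inS: "x \<in> S" "y \<in> S" "z \<in> S" using xyz by (auto simp: extreme_point_of_def)
  obtain tx ty tz where t: "x = p + tx *\<^sub>R d" "y = p + ty *\<^sub>R d" "z = p + tz *\<^sub>R d"
    using inS S by blast
  have d: "d \<noteq> 0" using t xyz by auto
  have key: False if "ta < tb" "tb < tc" "p + ta *\<^sub>R d \<in> S"
      "(p + tb *\<^sub>R d) extreme_point_of S" "p + tc *\<^sub>R d \<in> S" for ta tb tc
    using between_seg[OF that(1,2) d, of p] that(3-5) unfolding extreme_point_of_def by blast
  have "tx \<noteq> ty" "ty \<noteq> tz" "tx \<noteq> tz" using t xyz by auto
  then consider "tx < ty \<and> ty < tz" | "tx < tz \<and> tz < ty" | "ty < tx \<and> tx < tz"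
    | "ty < tz \<and> tz < tx" | "tz < tx \<and> tx < ty" | "tz < ty \<and> ty < tx" by linarith
  then show False
    by cases (use key xyz inS t in metis)+
qed



context ctx begin

lemma part4:
  assumes ci: "CARD('i) = 2" and ck: "CARD('k) = 2" and JU: "J = UNIV"
  shows "(lp_multiple_optima J lam mu \<longleftrightarrow> (\<exists>alpha beta. decomposable J mu alpha beta)) \<and>
        finite {xi. xi extreme_point_of S_LP J lam mu} \<and>
        card {xi. xi extreme_point_of S_LP J lam mu} \<le> 2"
proof -
  obtain i1 i2 :: 'i where i12: "i1 \<noteq> i2" and UI: "UNIV = {i1, i2}"
    using ci unfolding card_2_iff by metis
  obtain k1 k2 :: 'k where k12: "k1 \<noteq> k2" and UK: "UNIV = {k1, k2}"
    using ck unfolding card_2_iff by metis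
  have iall: "i = i1 \<or> i = i2" for i using UI by auto
  have kall: "k = k1 \<or> k = k2" for k using UK by auto
  define m11 where "m11 = mu (i1,k1)"
  define m12 where "m12 = mu (i1,k2)"
  define m21 where "m21 = mu (i2,k1)"
  define m22 where "m22 = mu (i2,k2)"
  have mpos: "m11 > 0" "m12 > 0" "m21 > 0" "m22 > 0"
    using mu_pos JU by (auto simp: m11_def m12_def m21_def m22_def)
  have eqs: "m11 * x $ (i1,k1) + m12 * x $ (i1,k2) = lam i1"
    "m21 * x $ (i2,k1) + m22 * x $ (i2,k2) = lam i2"
    "x $ (i1,k1) + x $ (i2,k1) = 1" "x $ (i1,k2) + x $ (i2,k2) = 1"
    if "x \<in> S_LP J lam mu" for x
  proof -
    have F: "lp_feasible J lam mu x 1" using that by (simp add: S_LP_def lp_optimal_def)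
    have R: "Rxi J mu x i = lam i" for i using F by (simp add: lp_feasible_def)
    have G: "Gxi J x k = 1" for k using full_load that by blast
    show "m11 * x $ (i1,k1) + m12 * x $ (i1,k2) = lam i1"
      using R[of i1] k12 unfolding JU Rxi_UNIV UK by (simp add: m11_def m12_def)
    show "m21 * x $ (i2,k1) + m22 * x $ (i2,k2) = lam i2"
      using R[of i2] k12 unfolding JU Rxi_UNIV UK by (simp add: m21_def m22_def)
    show "x $ (i1,k1) + x $ (i2,k1) = 1"
      using G[of k1] i12 unfolding JU Gxi_UNIV UI by simp
    show "x $ (i1,k2) + x $ (i2,k2) = 1"
      using G[of k2] i12 unfolding JU Gxi_UNIV UI by simp
  qed
  have diffs: "u $ (i1,k2) - v $ (i1,k2) = -(m11/m12) * (u $ (i1,k1) - v $ (i1,k1))"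
     "u $ (i2,k1) - v $ (i2,k1) = -(u $ (i1,k1) - v $ (i1,k1))"
     "u $ (i2,k2) - v $ (i2,k2) = (m11/m12) * (u $ (i1,k1) - v $ (i1,k1))"
    if "u \<in> S_LP J lam mu" "v \<in> S_LP J lam mu" for u v
  proof -
    note eu = eqs[OF that(1)] and ev = eqs[OF that(2)]
    have "m12 * (u $ (i1,k2) - v $ (i1,k2)) = - m11 * (u $ (i1,k1) - v $ (i1,k1))"
      using eu(1) ev(1) by (simp add: algebra_simps)
    then show 1: "u $ (i1,k2) - v $ (i1,k2) = -(m11/m12) * (u $ (i1,k1) - v $ (i1,k1))"
      using mpos by (simp add: field_simps)
    show "u $ (i2,k1) - v $ (i2,k1) = -(u $ (i1,k1) - v $ (i1,k1))" using eu(3) ev(3) by simp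
    show "u $ (i2,k2) - v $ (i2,k2) = (m11/m12) * (u $ (i1,k1) - v $ (i1,k1))"
      using eu(4) ev(4) 1 by simp
  qed
  have comp: "P (i,k)" if "P (i1,k1)" "P (i1,k2)" "P (i2,k1)" "P (i2,k2)" for P :: "'i \<times> 'k \<Rightarrow> bool" and i k
    using that iall[of i] kall[of k] by auto
  have same: "u = v" if "u \<in> S_LP J lam mu" "v \<in> S_LP J lam mu" "u $ (i1,k1) = v $ (i1,k1)" for u v
  proof -
    note d = diffs[OF that(1,2)]
    have "u $ j = v $ j" for j
    proof -
      obtain i k where jj: "j = (i,k)" by force
      show ?thesis unfolding jj by (rule comp) (use d that(3) in auto)
    qed
    then show ?thesis by (simp add: vec_eq_iff)
  qed
  have cross: "m21 * m12 = m22 * m11" if "u \<in> S_LP J lam mu" "v \<in> S_LP J lam mu" "u \<noteq> v" for u v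
  proof -
    define e where "e = u $ (i1,k1) - v $ (i1,k1)"
    have e0: "e \<noteq> 0" using same that by (auto simp: e_def)
    note eu = eqs[OF that(1)] and ev = eqs[OF that(2)] and d = diffs[OF that(1,2)]
    have "m21 * (u $ (i2,k1) - v $ (i2,k1)) + m22 * (u $ (i2,k2) - v $ (i2,k2)) = 0"
      using eu(2) ev(2) by (simp add: algebra_simps)
    then have "m21 * (- e) + m22 * ((m11/m12) * e) = 0" using d by (simp add: e_def)
    then have "e * (m22 * m11 - m21 * m12) = 0" using mpos by (simp add: field_simps)
    then show ?thesis using e0 by simp
  qed
  have multi_iff: "lp_multiple_optima J lam mu \<longleftrightarrow> (\<exists>alpha beta. decomposable J mu alpha beta)"
  proof
    assume "lp_multiple_optima J lam mu"
    then obtain x1 r1 x2 r2 where o: "lp_optimal J lam mu x1 r1" "lp_optimal J lam mu x2 r2"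
      "(x1, r1) \<noteq> (x2, r2)" by (auto simp: lp_multiple_optima_def)
    have "r1 = 1" "r2 = 1" using opt_rho o by auto
    then have S: "x1 \<in> S_LP J lam mu" "x2 \<in> S_LP J lam mu" "x1 \<noteq> x2" using o by (auto simp: S_LP_def)
    have cr: "m21 * m12 = m22 * m11" using cross[OF S] .
    define alpha where "alpha i = (if i = i1 then m11 + m12 else m21 * (m11 + m12) / m11)" for i
    define beta where "beta k = (if k = k1 then m11 / (m11 + m12) else m12 / (m11 + m12))" for k
    have "mu (i,k) = alpha i * beta k" for i k
    proof -
      have m22: "m22 = m21 * m12 / m11" using cr mpos by (simp add: field_simps)
      have pp: "m11 * m11 + m11 * m12 > 0" using mpos by (simp add: add_pos_pos)
      have s0: "m11 + m12 \<noteq> 0" "m11 \<noteq> 0" "m11 * m11 + m11 * m12 \<noteq> 0" using mpos pp by auto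
      have a1: "alpha i1 = m11 + m12" "alpha i2 = m21 * (m11 + m12) / m11"
        using i12 by (auto simp: alpha_def)
      have b1: "beta k1 = m11 / (m11 + m12)" "beta k2 = m12 / (m11 + m12)"
        using k12 by (auto simp: beta_def)
      have q: "m11 = alpha i1 * beta k1" "m12 = alpha i1 * beta k2"
        "m21 = alpha i2 * beta k1" "m22 = alpha i2 * beta k2"
        unfolding a1 b1 m22 using s0 by (simp_all add: field_simps)
      show ?thesis
        by (rule comp[where P = "\<lambda>(i,k). mu (i,k) = alpha i * beta k", simplified])
           (use q in \<open>simp_all add: m11_def m12_def m21_def m22_def\<close>)
    qed
    moreover have "(\<Sum>k\<in>UNIV. beta k) = 1"
      unfolding UK using k12 mpos by (simp add: beta_def add_divide_distrib[symmetric])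
    ultimately show "\<exists>alpha beta. decomposable J mu alpha beta" by (auto simp: decomposable_def)
  next
    assume "\<exists>alpha beta. decomposable J mu alpha beta"
    then obtain alpha beta where "decomposable J mu alpha beta" by blast
    from part3[OF this JU i12 k12] show "lp_multiple_optima J lam mu" .
  qed
  have ext: "finite {xi. xi extreme_point_of S_LP J lam mu} \<and>
        card {xi. xi extreme_point_of S_LP J lam mu} \<le> 2"
  proof (cases "\<exists>u\<in>S_LP J lam mu. \<exists>v\<in>S_LP J lam mu. u \<noteq> v")
    case True
    then obtain u v where uv: "u \<in> S_LP J lam mu" "v \<in> S_LP J lam mu" "u \<noteq> v" by blast
    have ne: "v $ (i1,k1) - u $ (i1,k1) \<noteq> 0" using same[OF uv(2,1)] uv(3) by auto
    have "S_LP J lam mu \<subseteq> range (\<lambda>t. u + t *\<^sub>R (v - u))"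
    proof
      fix y assume y: "y \<in> S_LP J lam mu"
      define t where "t = (y $ (i1,k1) - u $ (i1,k1)) / (v $ (i1,k1) - u $ (i1,k1))"
      note dy = diffs[OF y uv(1)] and dv = diffs[OF uv(2) uv(1)]
      have t1: "y $ (i1,k1) - u $ (i1,k1) = t * (v $ (i1,k1) - u $ (i1,k1))"
        using ne by (simp add: t_def)
      have "y $ j = (u + t *\<^sub>R (v - u)) $ j" for j
      proof -
        obtain i k where jj: "j = (i,k)" by force
        have "y $ (i,k) - u $ (i,k) = t * (v $ (i,k) - u $ (i,k))"
          by (rule comp[where P = "\<lambda>j. y $ j - u $ j = t * (v $ j - u $ j)", simplified])
             (fact t1, unfold dy dv t1, simp_all add: algebra_simps)
        then show ?thesis using jj by (simp add: algebra_simps)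
      qed
      then show "y \<in> range (\<lambda>t. u + t *\<^sub>R (v - u))" by (auto simp: vec_eq_iff)
    qed
    then show ?thesis by (rule line_extreme)
  next
    case False
    then have "S_LP J lam mu \<subseteq> range (\<lambda>t. xi0 + t *\<^sub>R 0)" using xi0_S by auto
    then show ?thesis by (rule line_extreme)
  qed
  show ?thesis using multi_iff ext by simp
qed

end

lemma two_distinct:
  assumes "2 \<le> CARD('a::finite)"
  obtains x y where "x \<noteq> (y::'a)"
proof -
  obtain T :: "'a set" where "card T = 2" using obtain_subset_with_card_n[OF assms] by metis
  then show ?thesis using that unfolding card_2_iff by blast
qed

theorem lemma2p4:
  fixes J :: "('i::finite \<times> 'k::finite) set"
    and lam :: "'i \<Rightarrow> real" and mu :: "'i \<times> 'k \<Rightarrow> real"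
  assumes lam_pos: "\<forall>i. 0 < lam i"
    and mu_pos: "\<forall>j\<in>J. 0 < mu j"
    and opt_val: "\<exists>xi. lp_optimal J lam mu xi 1"
    and full_load: "\<forall>xi\<in>S_LP J lam mu. \<forall>k. Gxi J xi k = 1"
    and dual_unique: "\<exists>!yz. dual_optimal J lam mu (fst yz) (snd yz)"
    and ystar_zstar: "dual_optimal J lam mu ystar zstar"
  shows
    "(\<forall>alpha beta. decomposable J mu alpha beta \<longrightarrow>
        (\<Sum>i\<in>UNIV. lam i / alpha i) = (\<Sum>k\<in>UNIV. beta k) \<and> (\<Sum>k\<in>UNIV. beta k) = 1)
   \<and> (\<forall>alpha beta. decomposable J mu alpha beta \<longrightarrow>
        ystar = (\<lambda>i. 1 / alpha i) \<and> zstar = beta)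
   \<and> (\<forall>alpha beta. decomposable J mu alpha beta \<and> J = UNIV \<and>
        2 \<le> CARD('i) \<and> 2 \<le> CARD('k) \<longrightarrow> lp_multiple_optima J lam mu)
   \<and> (CARD('i) = 2 \<and> CARD('k) = 2 \<and> J = UNIV \<longrightarrow>
        (lp_multiple_optima J lam mu \<longleftrightarrow> (\<exists>alpha beta. decomposable J mu alpha beta)) \<and>
        finite {xi. xi extreme_point_of S_LP J lam mu} \<and>
        card {xi. xi extreme_point_of S_LP J lam mu} \<le> 2)"
proof -
  interpret L: ctx J lam mu ystar zstar
    using assms by (unfold_locales) auto
  have p3: "lp_multiple_optima J lam mu"
    if hh: "decomposable J mu alpha beta" "J = UNIV" "2 \<le> CARD('i)" "2 \<le> CARD('k)" for alpha beta
  proof -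
    obtain i1 i2 :: 'i where "i1 \<noteq> i2" using two_distinct[OF hh(3)] by metis
    moreover obtain k1 k2 :: 'k where "k1 \<noteq> k2" using two_distinct[OF hh(4)] by metis
    ultimately show ?thesis using L.part3[OF hh(1,2)] by blast
  qed
  have p1: "(\<Sum>i\<in>UNIV. lam i / alpha i) = (\<Sum>k\<in>UNIV. beta k) \<and> (\<Sum>k\<in>UNIV. beta k) = 1"
    if "decomposable J mu alpha beta" for alpha beta
    using L.part1[OF that] that unfolding decomposable_def by simp
  show ?thesis
    apply (intro conjI allI impI)
    subgoal using p1 by blast
    subgoal using p1 by blast
    subgoal using L.part2 by blast
    subgoal using L.part2 by blast
    subgoal using p3 by blast
    subgoal using L.part4 by blast
    subgoal using L.part4 by blast
    subgoal using L.part4 by blast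
    done
qed

end
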